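(* Let $\varphi$ be an $N$-function with right derivative $p=\varphi'_+$. Then for every $f\in\mathcal M_{\varphi,w}$ with $f\neq0$, $$\bar k^{**}(f)=\sup\Big\{k>0:\rho_{\varphi_*,w}\Big(p\Big(\tfrac{k(f^* )^0}{w}\Big)\Big)\le1\Big\}<\infty .$$
   Context: Let $I=[0,\gamma)$, $0<\gamma\le\infty$, Lebesgue measure $m$, $L_0$ the measurable functions on $I$, $f^*$ the decreasing rearrangement of $f$. Orlicz function: convex $\varphi:[0,\infty)\to[0,\infty)$, $\varphi(0)=0$, $\varphi(u)>0$ for $u>0$; $N$-function: additionally $\lim_{u\to0}\varphi(u)/u=0$ and $\lim_{u\to\infty}\varphi(u)/u=\infty$. Complementary function $\varphi_*(v)=\sup_{u>0}(uv-\varphi(u))$. Weight: positive decreasing locally integrable $w$ on $I$, $W(t)=\int_0^tw$, $W(\infty)=\infty$ if $\gamma=\infty$. Orlicz–Lorentz modular $\rho_{\psi,w}(g)=\int_I\psi(g^* )w$. Halperin level function $g^0$ of $g\ge0$ w.r.t. $w$: with $G(a,b)=\int_a^bg$, $W(a,b)=\int_a^bw$, $(a,b]$ is a level interval if $G(a,t)/W(a,t)\le G(a,b)/W(a,b)$ for all $t\in(a,b]$, maximal if not contained in another; $g^0=\frac{G(a,b)}{W(a,b)}w$ on each maximal level interval and $g^0=g$ elsewhere. $Q_{\varphi,w}(f)=\int_I\varphi((f^* )^0/w)w$ and $\mathcal M_{\varphi,w}=\{f:Q_{\varphi,w}(kf)<\infty\text{ for some }k>0\}$. *)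

theory Defs
  imports "HOL-Analysis.Analysis"
begin

definition Iset :: "ereal \<Rightarrow> real set" where
  "Iset \<gamma> = {t. 0 \<le> t \<and> ereal t < \<gamma>}"

definition extE :: "(real \<Rightarrow> real) \<Rightarrow> ennreal \<Rightarrow> ennreal" where
  "extE \<psi> x = (if x = \<infinity> then \<infinity> else ennreal (\<psi> (enn2real x)))"

definition Orlicz_fun :: "(real \<Rightarrow> real) \<Rightarrow> bool" where
  "Orlicz_fun \<phi> \<longleftrightarrow> convex_on {0..} \<phi> \<and> \<phi> 0 = 0 \<and> (\<forall>u>0. \<phi> u > 0)"

definition N_fun :: "(real \<Rightarrow> real) \<Rightarrow> bool" where
  "N_fun \<phi> \<longleftrightarrow> Orlicz_fun \<phi> \<and> ((\<lambda>u. \<phi> u / u) \<longlongrightarrow> 0) (at_right 0)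
      \<and> filterlim (\<lambda>u. \<phi> u / u) at_top at_top"

definition compl_fun :: "(real \<Rightarrow> real) \<Rightarrow> real \<Rightarrow> real" where
  "compl_fun \<phi> v = (SUP u\<in>{0<..}. u * v - \<phi> u)"

definition weight :: "ereal \<Rightarrow> (real \<Rightarrow> real) \<Rightarrow> bool" where
  "weight \<gamma> w \<longleftrightarrow> (\<forall>t\<in>Iset \<gamma>. 0 < w t)
     \<and> (\<forall>s\<in>Iset \<gamma>. \<forall>t\<in>Iset \<gamma>. s \<le> t \<longrightarrow> w t \<le> w s)
     \<and> (\<forall>b. 0 \<le> b \<and> ereal b < \<gamma> \<longrightarrow> set_integrable lborel {0..b} w)
     \<and> (\<gamma> = \<infinity> \<longrightarrow> (\<integral>\<^sup>+ t\<in>Iset \<gamma>. ennreal (w t) \<partial>lborel) = \<infinity>)"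

text \<open>Decreasing rearrangement (of a [0,\<infinity>]-valued function; for a real f use |f|):
  F*(t) = inf { s : m{x\<in>I. F x > s} \<le> t }.\<close>
definition rearr :: "ereal \<Rightarrow> (real \<Rightarrow> ennreal) \<Rightarrow> real \<Rightarrow> ennreal" where
  "rearr \<gamma> F t = Inf {s. emeasure (lebesgue_on (Iset \<gamma>)) {x\<in>Iset \<gamma>. s < F x} \<le> ennreal t}"

definition Gint :: "(real \<Rightarrow> ennreal) \<Rightarrow> real \<Rightarrow> real \<Rightarrow> ennreal" where
  "Gint g a b = (\<integral>\<^sup>+ x\<in>{a<..b}. g x \<partial>lborel)"

definition Wint :: "(real \<Rightarrow> real) \<Rightarrow> real \<Rightarrow> real \<Rightarrow> ennreal" where
  "Wint w a b = (\<integral>\<^sup>+ x\<in>{a<..b}. ennreal (w x) \<partial>lborel)"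

definition level_interval ::
  "ereal \<Rightarrow> (real \<Rightarrow> real) \<Rightarrow> (real \<Rightarrow> ennreal) \<Rightarrow> real \<Rightarrow> real \<Rightarrow> bool" where
  "level_interval \<gamma> w g a b \<longleftrightarrow> 0 \<le> a \<and> a < b \<and> ereal b \<le> \<gamma> \<and>
     (\<forall>t. a < t \<and> t \<le> b \<longrightarrow> Gint g a t / Wint w a t \<le> Gint g a b / Wint w a b)"

definition max_level_interval ::
  "ereal \<Rightarrow> (real \<Rightarrow> real) \<Rightarrow> (real \<Rightarrow> ennreal) \<Rightarrow> real \<Rightarrow> real \<Rightarrow> bool" where
  "max_level_interval \<gamma> w g a b \<longleftrightarrow> level_interval \<gamma> w g a b \<and>
     \<not> (\<exists>c d. level_interval \<gamma> w g c d \<and> {a<..b} \<subset> {c<..d})"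

definition level_fun :: "ereal \<Rightarrow> (real \<Rightarrow> real) \<Rightarrow> (real \<Rightarrow> ennreal) \<Rightarrow> real \<Rightarrow> ennreal" where
  "level_fun \<gamma> w g t =
     (if \<exists>a b. max_level_interval \<gamma> w g a b \<and> t \<in> {a<..b}
      then (let (a, b) = (SOME (a, b). max_level_interval \<gamma> w g a b \<and> t \<in> {a<..b})
            in Gint g a b / Wint w a b * ennreal (w t))
      else g t)"

definition rho_OL :: "(real \<Rightarrow> real) \<Rightarrow> ereal \<Rightarrow> (real \<Rightarrow> real) \<Rightarrow> (real \<Rightarrow> ennreal) \<Rightarrow> ennreal" where
  "rho_OL \<psi> \<gamma> w g = (\<integral>\<^sup>+ t\<in>Iset \<gamma>. extE \<psi> (rearr \<gamma> g t) * ennreal (w t) \<partial>lborel)"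

definition fstar0 :: "ereal \<Rightarrow> (real \<Rightarrow> real) \<Rightarrow> (real \<Rightarrow> real) \<Rightarrow> real \<Rightarrow> ennreal" where
  "fstar0 \<gamma> w f = level_fun \<gamma> w (rearr \<gamma> (\<lambda>x. ennreal \<bar>f x\<bar>))"

definition Q_fun :: "(real \<Rightarrow> real) \<Rightarrow> ereal \<Rightarrow> (real \<Rightarrow> real) \<Rightarrow> (real \<Rightarrow> real) \<Rightarrow> ennreal" where
  "Q_fun \<phi> \<gamma> w f = (\<integral>\<^sup>+ t\<in>Iset \<gamma>. extE \<phi> (fstar0 \<gamma> w f t / ennreal (w t)) * ennreal (w t) \<partial>lborel)"

definition M_space :: "(real \<Rightarrow> real) \<Rightarrow> ereal \<Rightarrow> (real \<Rightarrow> real) \<Rightarrow> (real \<Rightarrow> real) set" where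
  "M_space \<phi> \<gamma> w = {f. f \<in> borel_measurable (lebesgue_on (Iset \<gamma>)) \<and>
      (\<exists>k>0. Q_fun \<phi> \<gamma> w (\<lambda>x. k * f x) < \<infinity>)}"

end

theory Submission
  imports Defs
begin

lemma slope_p:
  fixes \<phi> p :: "real \<Rightarrow> real"
  assumes cvx: "convex_on {0..} \<phi>"
    and der: "\<forall>u\<ge>0. ((\<lambda>h. (\<phi> (u + h) - \<phi> u) / h) \<longlongrightarrow> p u) (at_right 0)"
    and xy: "0 \<le> x" "x < y"
  shows "p x \<le> (\<phi> y - \<phi> x) / (y - x)" and "(\<phi> y - \<phi> x) / (y - x) \<le> p y"
proof -
  have "eventually (\<lambda>h. (\<phi> (x + h) - \<phi> x) / h \<le> (\<phi> y - \<phi> x) / (y - x)) (at_right 0)"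
  proof -
    have "eventually (\<lambda>h. 0 < h \<and> h < y - x) (at_right (0::real))"
      using eventually_at_right_real[of 0 "y-x"] xy by auto
    then show ?thesis
    proof (rule eventually_mono)
      fix h assume h: "0 < h \<and> h < y - x"
      have "(\<phi> x - \<phi> (x+h)) / (x - (x+h)) \<le> (\<phi> x - \<phi> y) / (x - y)"
        using convex_on_slope_le(1)[OF cvx, of x y "x+h"] xy h by auto
      moreover have "(\<phi> x - \<phi> (x+h)) / (x - (x+h)) = (\<phi> (x + h) - \<phi> x) / h"
        using h by (simp add: field_simps)
      moreover have "(\<phi> x - \<phi> y) / (x - y) = (\<phi> y - \<phi> x) / (y - x)"
        by (metis minus_diff_eq minus_divide_divide)
      ultimately show "(\<phi> (x + h) - \<phi> x) / h \<le> (\<phi> y - \<phi> x) / (y - x)" by simp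
    qed
  qed
  then show "p x \<le> (\<phi> y - \<phi> x) / (y - x)"
    using der xy by (intro tendsto_upperbound[of _ "p x" "at_right 0"]) auto
next
  have "eventually (\<lambda>h. (\<phi> y - \<phi> x) / (y - x) \<le> (\<phi> (y + h) - \<phi> y) / h) (at_right 0)"
  proof -
    have "eventually (\<lambda>h. 0 < h) (at_right (0::real))"
      by (simp add: eventually_at_right_less)
    then show ?thesis
    proof (rule eventually_mono)
      fix h :: real assume h: "0 < h"
      have 1: "(\<phi> x - \<phi> y) / (x - y) \<le> (\<phi> x - \<phi> (y+h)) / (x - (y+h))"
        using convex_on_slope_le(1)[OF cvx, of x "y+h" y] xy h by auto
      have 2: "(\<phi> x - \<phi> (y+h)) / (x - (y+h)) \<le> (\<phi> y - \<phi> (y+h)) / (y - (y+h))"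
        using convex_on_slope_le(2)[OF cvx, of x "y+h" y] xy h by auto
      have "(\<phi> y - \<phi> (y+h)) / (y - (y+h)) = (\<phi> (y + h) - \<phi> y) / h"
        using h by (simp add: field_simps)
      moreover have "(\<phi> x - \<phi> y) / (x - y) = (\<phi> y - \<phi> x) / (y - x)"
        by (metis minus_diff_eq minus_divide_divide)
      ultimately show "(\<phi> y - \<phi> x) / (y - x) \<le> (\<phi> (y + h) - \<phi> y) / h" using 1 2 by simp
    qed
  qed
  then show "(\<phi> y - \<phi> x) / (y - x) \<le> p y"
    using der xy by (intro tendsto_lowerbound[of _ "p y" "at_right 0"]) auto
qed

lemma Nfun_big:
  assumes "N_fun \<phi>"
  shows "\<exists>U>0. \<forall>u\<ge>U. M \<le> \<phi> u / u"
proof -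
  have "filterlim (\<lambda>u. \<phi> u / u) at_top at_top" using assms by (simp add: N_fun_def)
  then have "eventually (\<lambda>u. M \<le> \<phi> u / u) at_top" by (simp add: filterlim_at_top)
  then obtain N where N: "\<And>u. u \<ge> N \<Longrightarrow> M \<le> \<phi> u / u" by (auto simp: eventually_at_top_linorder)
  show ?thesis by (rule exI[of _ "max N 1"]) (use N in auto)
qed

lemma compl_bdd:
  assumes "N_fun \<phi>" "0 \<le> y"
  shows "bdd_above ((\<lambda>u. u * y - \<phi> u) ` {0<..})"
proof -
  obtain U where U: "U > 0" "\<And>u. u \<ge> U \<Longrightarrow> y + 1 \<le> \<phi> u / u"
    using Nfun_big[OF assms(1)] by blast
  have pos: "\<And>u. u > 0 \<Longrightarrow> \<phi> u > 0" using assms(1) by (simp add: N_fun_def Orlicz_fun_def)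
  show ?thesis
  proof (rule bdd_aboveI2)
    fix u :: real assume u: "u \<in> {0<..}"
    show "u * y - \<phi> u \<le> U * y"
    proof (cases "u \<ge> U")
      case True
      then have "(y+1) * u \<le> \<phi> u" using U(2)[OF True] U(1) by (simp add: pos_le_divide_eq)
      then have "u * y - \<phi> u \<le> - u" by (simp add: algebra_simps)
      moreover have "0 \<le> U * y" using U(1) assms(2) by simp
      ultimately show ?thesis using u by simp
    next
      case False
      then have "u * y \<le> U * y" using assms(2) by (simp add: mult_right_mono)
      then show ?thesis using pos[of u] u by simp
    qed
  qed
qed

lemma compl_lower:
  assumes "N_fun \<phi>" "0 \<le> y"
  shows "y - \<phi> 1 \<le> compl_fun \<phi> y"
  unfolding compl_fun_def
  using cSUP_upper[OF _ compl_bdd[OF assms], of 1] by simp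

lemma p_mono:
  fixes \<phi> p :: "real \<Rightarrow> real"
  assumes cvx: "convex_on {0..} \<phi>"
    and der: "\<forall>u\<ge>0. ((\<lambda>h. (\<phi> (u + h) - \<phi> u) / h) \<longlongrightarrow> p u) (at_right 0)"
    and xy: "0 \<le> x" "x \<le> y"
  shows "p x \<le> p y"
proof (cases "x = y")
  case False
  then show ?thesis using slope_p[OF cvx der, of x y] xy by linarith
qed simp

lemma p_lower:
  fixes \<phi> p :: "real \<Rightarrow> real"
  assumes "N_fun \<phi>"
    and der: "\<forall>u\<ge>0. ((\<lambda>h. (\<phi> (u + h) - \<phi> u) / h) \<longlongrightarrow> p u) (at_right 0)"
    and "0 < u"
  shows "\<phi> u / u \<le> p u"
  using slope_p(2)[of \<phi> p 0 u] assms by (simp add: N_fun_def Orlicz_fun_def)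

lemma extE_mono:
  assumes "\<And>x y. 0 \<le> x \<Longrightarrow> x \<le> y \<Longrightarrow> p x \<le> p y"
  shows "mono (extE p)"
proof (rule monoI)
  fix x y :: ennreal assume "x \<le> y"
  show "extE p x \<le> extE p y"
  proof (cases "y = \<infinity>")
    case False
    then have "x \<noteq> \<infinity>" using \<open>x \<le> y\<close> top_unique by fastforce
    have "enn2real x \<le> enn2real y" using \<open>x \<le> y\<close> False enn2real_mono by (simp add: less_top)
    then have "p (enn2real x) \<le> p (enn2real y)" using assms by simp
    then show ?thesis using False \<open>x \<noteq> \<infinity>\<close> by (simp add: extE_def ennreal_leI)
  qed (simp add: extE_def)
qed

lemma med1: fixes x y X Y :: real assumes "X > 0" "Y > 0"
  shows "(x/X \<le> (x+y)/(X+Y)) \<longleftrightarrow> (x/X \<le> y/Y)"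
  using assms by (simp add: field_simps)

lemma med2: fixes x y X Y :: real assumes "X > 0" "Y > 0"
  shows "((x+y)/(X+Y) \<le> y/Y) \<longleftrightarrow> (x/X \<le> y/Y)"
  using assms by (simp add: field_simps)

lemma level_union_real:
  fixes G W :: "real \<Rightarrow> real \<Rightarrow> real"
  assumes addG: "\<And>x y z. a \<le> x \<Longrightarrow> x \<le> y \<Longrightarrow> y \<le> z \<Longrightarrow> z \<le> d \<Longrightarrow> G x z = G x y + G y z"
    and addW: "\<And>x y z. a \<le> x \<Longrightarrow> x \<le> y \<Longrightarrow> y \<le> z \<Longrightarrow> z \<le> d \<Longrightarrow> W x z = W x y + W y z"
    and Wpos: "\<And>x y. a \<le> x \<Longrightarrow> x < y \<Longrightarrow> y \<le> d \<Longrightarrow> W x y > 0"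
    and ord: "a < c" "c < b" "b < d"
    and L1: "\<And>t. a < t \<Longrightarrow> t \<le> b \<Longrightarrow> G a t / W a t \<le> G a b / W a b"
    and L2: "\<And>t. c < t \<Longrightarrow> t \<le> d \<Longrightarrow> G c t / W c t \<le> G c d / W c d"
    and t: "a < t" "t \<le> d"
  shows "G a t / W a t \<le> G a d / W a d"
proof -
  define R where "R x y = G x y / W x y" for x y
  have split: "(R x y \<le> R x z \<longleftrightarrow> R x y \<le> R y z) \<and> (R x z \<le> R y z \<longleftrightarrow> R x y \<le> R y z)"
    if "a \<le> x" "x < y" "y < z" "z \<le> d" for x y z
  proof -
    have "W x y > 0" "W y z > 0" using Wpos that by auto
    then show ?thesis unfolding R_def
      using addG[of x y z] addW[of x y z] that med1[of "W x y" "W y z" "G x y" "G y z"]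
        med2[of "W x y" "W y z" "G x y" "G y z"] by auto
  qed
  have r1: "R a c \<le> R a b" using L1[of c] ord unfolding R_def by auto
  then have r1': "R a c \<le> R c b" "R a b \<le> R c b" using split[of a c b] ord by auto
  have r2: "R c b \<le> R c d" using L2[of b] ord unfolding R_def by auto
  then have r2': "R c b \<le> R b d" "R c d \<le> R b d" using split[of c b d] ord by auto
  show ?thesis
  proof (cases "t \<le> b")
    case True
    have "R a b \<le> R b d" using r1' r2' r2 by linarith
    then have "R a b \<le> R a d" using split[of a b d] ord by auto
    then show ?thesis using L1[of t] True t unfolding R_def by linarith
  next
    case False
    show ?thesis
    proof (cases "t = d")
      case False
      with \<open>\<not> t \<le> b\<close> t have tt: "b < t" "t < d" by auto
      have "R c t \<le> R c d" using L2[of t] tt ord unfolding R_def by auto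
      then have "R c d \<le> R t d" using split[of c t d] tt ord by auto
      moreover have "R a c \<le> R c d" using r1 r1' r2 by linarith
      then have "R a d \<le> R c d" using split[of a c d] ord by auto
      ultimately have "R a d \<le> R t d" by linarith
      then have "R a t \<le> R a d" using split[of a t d] tt ord by auto
      then show ?thesis unfolding R_def .
    qed simp
  qed
qed

locale LV =
  fixes \<gamma> :: ereal and w :: "real \<Rightarrow> real" and g :: "real \<Rightarrow> ennreal"
  assumes gam: "0 < \<gamma>" and wgt: "weight \<gamma> w" and gmeas: "g \<in> borel_measurable borel"
begin

definition wx :: "real \<Rightarrow> real" where
  "wx t = (if t < 0 then w 0 else if ereal t < \<gamma> then w t else 0)"

lemma I_iff: "t \<in> Iset \<gamma> \<longleftrightarrow> 0 \<le> t \<and> ereal t < \<gamma>"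
  by (simp add: Iset_def)

lemma zero_I: "0 \<in> Iset \<gamma>" using gam by (simp add: I_iff zero_ereal_def)

lemma I_down: "0 \<le> s \<Longrightarrow> s \<le> t \<Longrightarrow> t \<in> Iset \<gamma> \<Longrightarrow> s \<in> Iset \<gamma>"
  by (auto simp: I_iff) (meson ereal_less_eq(3) order_le_less_trans)

lemma w_pos: "t \<in> Iset \<gamma> \<Longrightarrow> 0 < w t"
  using wgt by (simp add: weight_def)

lemma w_anti: "s \<in> Iset \<gamma> \<Longrightarrow> t \<in> Iset \<gamma> \<Longrightarrow> s \<le> t \<Longrightarrow> w t \<le> w s"
  using wgt by (simp add: weight_def)

lemma wx_nonneg: "0 \<le> wx t"
  using w_pos zero_I by (auto simp: wx_def I_iff less_imp_le)

lemma wx_anti: "s \<le> t \<Longrightarrow> wx t \<le> wx s"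
proof -
  assume st: "s \<le> t"
  show ?thesis
  proof (cases "t < 0")
    case True then show ?thesis using st by (simp add: wx_def)
  next
    case False
    show ?thesis
    proof (cases "ereal t < \<gamma>")
      case True
      then have tI: "t \<in> Iset \<gamma>" using False by (simp add: I_iff)
      show ?thesis
      proof (cases "s < 0")
        case True then show ?thesis using w_anti[OF zero_I tI] False tI w_pos[OF zero_I] by (simp add: wx_def I_iff)
      next
        case False
        then have "s \<in> Iset \<gamma>" using I_down[OF _ st tI] by simp
        then show ?thesis using w_anti[OF _ tI st] False tI by (simp add: wx_def I_iff)
      qed
    next
      case False2: False
      then have "wx t = 0" using False by (simp add: wx_def)
      then show ?thesis using wx_nonneg[of s] by simp
    qed
  qed
qed

lemma wx_meas: "wx \<in> borel_measurable borel"
proof -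
  have "mono (\<lambda>t. - wx t)" by (auto simp: mono_def intro: wx_anti)
  then have "(\<lambda>t. - wx t) \<in> borel_measurable borel" by (rule borel_measurable_mono)
  then have "(\<lambda>t. - (- wx t)) \<in> borel_measurable borel" by measurable
  then show ?thesis by simp
qed

lemma wx_I: "t \<in> Iset \<gamma> \<Longrightarrow> wx t = w t"
  by (simp add: wx_def I_iff)

lemma W_wx:
  assumes "0 \<le> a" "ereal b \<le> \<gamma>"
  shows "Wint w a b = (\<integral>\<^sup>+ x\<in>{a<..b}. ennreal (wx x) \<partial>lborel)"
  unfolding Wint_def
proof (rule nn_integral_cong_AE)
  show "AE x in lborel. ennreal (w x) * indicator {a<..b} x = ennreal (wx x) * indicator {a<..b} x"
    using AE_lborel_singleton[of b]
  proof (rule AE_mp, intro AE_I2 impI)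
    fix x :: real assume "x \<noteq> b"
    show "ennreal (w x) * indicator {a<..b} x = ennreal (wx x) * indicator {a<..b} x"
    proof (cases "x \<in> {a<..b}")
      case True
      then have "x < b" using \<open>x \<noteq> b\<close> by auto
      then have "ereal x < ereal b" by simp
      then have "ereal x < \<gamma>" using assms(2) by (rule order_less_le_trans)
      then have "x \<in> Iset \<gamma>" using True assms(1) by (simp add: I_iff)
      then show ?thesis by (simp add: wx_I)
    qed simp
  qed
qed

lemma ind_split: fixes x y z t :: real shows "x \<le> y \<Longrightarrow> y \<le> z \<Longrightarrow>
   indicator {x<..z} t = (indicator {x<..y} t + indicator {y<..z} t :: ennreal)"
  by (cases "t \<le> y") (simp_all add: indicator_def)
lemma int_split:
  fixes h :: "real \<Rightarrow> ennreal" and x y z :: real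
  assumes "h \<in> borel_measurable borel" "x \<le> y" "y \<le> z"
  shows "(\<integral>\<^sup>+ t\<in>{x<..z}. h t \<partial>lborel) = (\<integral>\<^sup>+ t\<in>{x<..y}. h t \<partial>lborel) + (\<integral>\<^sup>+ t\<in>{y<..z}. h t \<partial>lborel)"
proof -
  have "\<And>t. h t * indicator {x<..z} t = h t * indicator {x<..y} t + h t * indicator {y<..z} t"
    using ind_split[OF assms(2,3)] by (simp add: distrib_left)
  then have "(\<integral>\<^sup>+ t\<in>{x<..z}. h t \<partial>lborel) = (\<integral>\<^sup>+ t. h t * indicator {x<..y} t + h t * indicator {y<..z} t \<partial>lborel)"
    by presburger
  also have "\<dots> = (\<integral>\<^sup>+ t\<in>{x<..y}. h t \<partial>lborel) + (\<integral>\<^sup>+ t\<in>{y<..z}. h t \<partial>lborel)"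
    using assms(1) by (intro nn_integral_add) (auto intro!: borel_measurable_times_ennreal borel_measurable_indicator)
  finally show ?thesis .
qed

lemma W_add: "0 \<le> x \<Longrightarrow> x \<le> y \<Longrightarrow> y \<le> z \<Longrightarrow> ereal z \<le> \<gamma> \<Longrightarrow> Wint w x z = Wint w x y + Wint w y z"
proof -
  assume a: "0 \<le> x" "x \<le> y" "y \<le> z" "ereal z \<le> \<gamma>"
  have "ereal y \<le> \<gamma>" using a by (meson ereal_less_eq(3) order_trans)
  have m: "(\<lambda>t. ennreal (wx t)) \<in> borel_measurable borel" using wx_meas by measurable
  have e1: "Wint w x z = (\<integral>\<^sup>+ t\<in>{x<..z}. ennreal (wx t) \<partial>lborel)" using a by (intro W_wx) auto
  have e2: "Wint w x y = (\<integral>\<^sup>+ t\<in>{x<..y}. ennreal (wx t) \<partial>lborel)" using a \<open>ereal y \<le> \<gamma>\<close> by (intro W_wx) auto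
  have e3: "Wint w y z = (\<integral>\<^sup>+ t\<in>{y<..z}. ennreal (wx t) \<partial>lborel)" using a by (intro W_wx) auto
  show ?thesis unfolding e1 e2 e3 by (rule int_split[OF m a(2,3)])
qed

lemma G_add: "x \<le> y \<Longrightarrow> y \<le> z \<Longrightarrow> Gint g x z = Gint g x y + Gint g y z"
  unfolding Gint_def by (rule int_split[OF gmeas])

lemma W_fin: assumes "0 \<le> a" "ereal b \<le> \<gamma>" shows "Wint w a b < \<infinity>"
proof -
  have "Wint w a b \<le> (\<integral>\<^sup>+ x. ennreal (w 0) * indicator {a<..b} x \<partial>lborel)"
    unfolding W_wx[OF assms]
  proof (rule nn_integral_mono)
    fix x show "ennreal (wx x) * indicator {a<..b} x \<le> ennreal (w 0) * indicator {a<..b} x"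
      using wx_anti[of 0 x] assms(1) wx_I[OF zero_I] by (auto simp: indicator_def ennreal_leI)
  qed
  also have "\<dots> < \<infinity>" by (cases "a \<le> b") (simp_all add: nn_integral_cmult_indicator ennreal_mult_less_top)
  finally show ?thesis .
qed

lemma W_pos: assumes "0 \<le> a" "a < b" "ereal b \<le> \<gamma>" shows "0 < Wint w a b"
proof -
  define m where "m = (a + b) / 2"
  have m: "a < m" "m < b" using assms by (auto simp: m_def)
  have "ereal m < ereal b" using m by simp
  then have "ereal m < \<gamma>" using assms(3) by (rule order_less_le_trans)
  then have mI: "m \<in> Iset \<gamma>" using m assms by (simp add: I_iff)
  have "(\<integral>\<^sup>+ x. ennreal (w m) * indicator {a<..m} x \<partial>lborel) \<le> Wint w a b"
    unfolding W_wx[OF assms(1,3)]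
  proof (rule nn_integral_mono)
    fix x show "ennreal (w m) * indicator {a<..m} x \<le> ennreal (wx x) * indicator {a<..b} x"
      using wx_anti[of x m] wx_I[OF mI] m by (auto simp: indicator_def ennreal_leI)
  qed
  moreover have "0 < (\<integral>\<^sup>+ x. ennreal (w m) * indicator {a<..m} x \<partial>lborel)"
    using w_pos[OF mI] m by (simp add: nn_integral_cmult_indicator ennreal_zero_less_mult_iff)
  ultimately show ?thesis by simp
qed

end

context LV begin

lemma ereal_le_trans: "y \<le> d \<Longrightarrow> ereal d \<le> \<gamma> \<Longrightarrow> ereal y \<le> \<gamma>"
  by (meson ereal_less_eq(3) order_trans)

lemma G_mono_sub: "a \<le> x \<Longrightarrow> y \<le> d \<Longrightarrow> Gint g x y \<le> Gint g a d"
  unfolding Gint_def by (rule nn_integral_mono) (auto simp: indicator_def)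

lemma level_union:
  assumes L1: "level_interval \<gamma> w g a b" and L2: "level_interval \<gamma> w g c d"
    and o: "a < c" "c < b" "b < d"
  shows "level_interval \<gamma> w g a d"
proof -
  have a0: "0 \<le> a" and bg: "ereal b \<le> \<gamma>" using L1 by (auto simp: level_interval_def)
  have dg: "ereal d \<le> \<gamma>" using L2 by (auto simp: level_interval_def)
  have yg: "ereal y \<le> \<gamma>" if "y \<le> d" for y using that dg by (rule ereal_le_trans)
  have "\<forall>t. a < t \<and> t \<le> d \<longrightarrow> Gint g a t / Wint w a t \<le> Gint g a d / Wint w a d"
  proof (intro allI impI)
    fix t assume t: "a < t \<and> t \<le> d"
    show "Gint g a t / Wint w a t \<le> Gint g a d / Wint w a d"
    proof (cases "Gint g a d = \<infinity>")
      case True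
      have "Wint w a d \<noteq> \<infinity>" using W_fin[OF a0 dg] by simp
      then show ?thesis using True by (simp add: ennreal_top_divide)
    next
      case False
      define Gr where "Gr x y = enn2real (Gint g x y)" for x y
      define Wr where "Wr x y = enn2real (Wint w x y)" for x y
      have Gfin: "Gint g x y < \<infinity>" if "a \<le> x" "y \<le> d" for x y
        using G_mono_sub[OF that] False by (simp add: less_top order_le_less_trans)
      have Geq: "Gint g x y = ennreal (Gr x y)" if "a \<le> x" "y \<le> d" for x y
        using Gfin[OF that] unfolding Gr_def by simp
      have Wfin: "Wint w x y < \<infinity>" if "a \<le> x" "y \<le> d" for x y
        using W_fin[of x y] that a0 yg by simp
      have Weq: "Wint w x y = ennreal (Wr x y)" if "a \<le> x" "y \<le> d" for x y
        using Wfin[OF that] unfolding Wr_def by simp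
      have Wpos: "Wr x y > 0" if "a \<le> x" "x < y" "y \<le> d" for x y
        using W_pos[of x y] Wfin[of x y] that a0 yg unfolding Wr_def
        by (simp add: enn2real_positive_iff less_top)
      have ratio: "Gint g x y / Wint w x y = ennreal (Gr x y / Wr x y)" if "a \<le> x" "x < y" "y \<le> d" for x y
      proof -
        have "Gint g x y / Wint w x y = ennreal (Gr x y) / ennreal (Wr x y)"
          using Geq[of x y] Weq[of x y] that by simp
        also have "\<dots> = ennreal (Gr x y / Wr x y)"
          using Wpos[OF that] by (simp add: divide_ennreal Gr_def)
        finally show ?thesis .
      qed
      have rnn: "0 \<le> Gr x y / Wr x y" for x y unfolding Gr_def Wr_def by simp
      have "Gr a t / Wr a t \<le> Gr a d / Wr a d"
      proof (rule level_union_real[of a d Gr Wr c b])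
        fix x y z assume xyz: "a \<le> x" "x \<le> y" "y \<le> z" "z \<le> d"
        show "Gr x z = Gr x y + Gr y z"
          using G_add[of x y z] Gfin[of x y] Gfin[of y z] xyz unfolding Gr_def
          by (simp add: enn2real_plus)
        show "Wr x z = Wr x y + Wr y z"
          using W_add[of x y z] Wfin[of x y] Wfin[of y z] xyz a0 yg[of z] unfolding Wr_def
          by (simp add: enn2real_plus)
      next
        fix x y assume "a \<le> x" "x < y" "y \<le> d" then show "0 < Wr x y" by (rule Wpos)
      next
        fix s assume s: "a < s" "s \<le> b"
        have "Gint g a s / Wint w a s \<le> Gint g a b / Wint w a b"
          using L1 s by (auto simp: level_interval_def)
        then show "Gr a s / Wr a s \<le> Gr a b / Wr a b"
          using ratio[of a s] ratio[of a b] s o rnn by (simp add: ennreal_le_iff)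
      next
        fix s assume s: "c < s" "s \<le> d"
        have "Gint g c s / Wint w c s \<le> Gint g c d / Wint w c d"
          using L2 s by (auto simp: level_interval_def)
        then show "Gr c s / Wr c s \<le> Gr c d / Wr c d"
          using ratio[of c s] ratio[of c d] s o rnn by (simp add: ennreal_le_iff)
      qed (use o t in auto)
      then show ?thesis using ratio[of a t] ratio[of a d] t o by (simp add: ennreal_leI)
    qed
  qed
  then show ?thesis using a0 o dg by (simp add: level_interval_def)
qed

lemma maxlev_unique1:
  assumes M1: "max_level_interval \<gamma> w g a b" and M2: "max_level_interval \<gamma> w g c d"
    and t: "t \<in> {a<..b}" "t \<in> {c<..d}" and ac: "a \<le> c"
  shows "a = c \<and> b = d"
proof -
  have L1: "level_interval \<gamma> w g a b" and N1: "\<not> (\<exists>c d. level_interval \<gamma> w g c d \<and> {a<..b} \<subset> {c<..d})"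
    using M1 by (auto simp: max_level_interval_def)
  have L2: "level_interval \<gamma> w g c d" and N2: "\<not> (\<exists>a b. level_interval \<gamma> w g a b \<and> {c<..d} \<subset> {a<..b})"
    using M2 by (auto simp: max_level_interval_def)
  show ?thesis
  proof (cases "a = c")
    case True
    show ?thesis
    proof (rule ccontr)
      assume "\<not> ?thesis"
      then have "b < d \<or> d < b" using True by auto
      then show False
      proof
        assume "b < d"
        then have "{a<..b} \<subseteq> {c<..d}" "d \<in> {c<..d} - {a<..b}" using True t by auto
        then have "{a<..b} \<subset> {c<..d}" by blast
        then show False using N1 L2 by blast
      next
        assume "d < b"
        then have "{c<..d} \<subseteq> {a<..b}" "b \<in> {a<..b} - {c<..d}" using True t by auto
        then have "{c<..d} \<subset> {a<..b}" by blast
        then show False using N2 L1 by blast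
      qed
    qed
  next
    case False
    then have ac': "a < c" using ac by simp
    show ?thesis
    proof (cases "d \<le> b")
      case True
      have "c \<in> {a<..b}" "c \<notin> {c<..d}" using ac' t by auto
      then have "{c<..d} \<subset> {a<..b}" using True ac' by auto
      then show ?thesis using N2 L1 by blast
    next
      case False
      have cb: "c < b" using t by auto
      have "level_interval \<gamma> w g a d" using level_union[OF L1 L2 ac' cb] False by simp
      moreover have "{a<..b} \<subset> {a<..d}" using False t by auto
      ultimately show ?thesis using N1 by blast
    qed
  qed
qed

lemma maxlev_unique:
  assumes "max_level_interval \<gamma> w g a b" "max_level_interval \<gamma> w g c d"
    "t \<in> {a<..b}" "t \<in> {c<..d}"
  shows "a = c \<and> b = d"
proof (cases "a \<le> c")
  case True then show ?thesis using maxlev_unique1[OF assms] by simp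
next
  case False then show ?thesis using maxlev_unique1[OF assms(2,1,4,3)] by simp
qed

lemma lf_in:
  assumes M: "max_level_interval \<gamma> w g a b" and t: "t \<in> {a<..b}"
  shows "level_fun \<gamma> w g t = Gint g a b / Wint w a b * ennreal (w t)"
proof -
  let ?P = "\<lambda>(a, b). max_level_interval \<gamma> w g a b \<and> t \<in> {a<..b}"
  have ex: "\<exists>x. ?P x" using M t by auto
  obtain a' b' where ab: "(SOME x. ?P x) = (a', b')" by (cases "SOME x. ?P x") auto
  have "?P (a', b')" using someI_ex[OF ex] unfolding ab .
  then have "a' = a \<and> b' = b" using maxlev_unique[OF _ M _ t] by auto
  then show ?thesis using ab M t unfolding level_fun_def by auto
qed

lemma lf_out:
  assumes "\<not> (\<exists>a b. max_level_interval \<gamma> w g a b \<and> t \<in> {a<..b})"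
  shows "level_fun \<gamma> w g t = g t"
  using assms unfolding level_fun_def by auto

end

context LV begin

definition Fam :: "(real \<times> real) set" where
  "Fam = {p. max_level_interval \<gamma> w g (fst p) (snd p)}"

lemma Fam_countable: "countable Fam"
proof -
  define q where "q p = (SOME r. r \<in> \<rat> \<and> fst p < r \<and> r < snd p)" for p :: "real \<times> real"
  have qp: "q p \<in> \<rat> \<and> fst p < q p \<and> q p < snd p" if "p \<in> Fam" for p
  proof -
    have "fst p < snd p" using that by (auto simp: Fam_def max_level_interval_def level_interval_def)
    then have "\<exists>r. r \<in> \<rat> \<and> fst p < r \<and> r < snd p" using Rats_dense_in_real by blast
    then show ?thesis unfolding q_def by (rule someI_ex)
  qed
  have inj: "inj_on q Fam"
  proof (rule inj_onI)
    fix p p' assume p: "p \<in> Fam" "p' \<in> Fam" "q p = q p'"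
    have "q p \<in> {fst p<..snd p}" "q p \<in> {fst p'<..snd p'}" using qp[OF p(1)] qp[OF p(2)] p(3) by auto
    then have "fst p = fst p' \<and> snd p = snd p'"
      using maxlev_unique[of "fst p" "snd p" "fst p'" "snd p'"] p(1,2) by (auto simp: Fam_def)
    then show "p = p'" by (simp add: prod_eq_iff)
  qed
  have "q ` Fam \<subseteq> \<rat>" using qp by auto
  then have cq: "countable (q ` Fam)" using countable_rat by (rule countable_subset)
  show ?thesis by (rule countable_image_inj_on[OF cq inj])
qed

definition V :: "real \<Rightarrow> ennreal" where
  "V t = level_fun \<gamma> w g t / ennreal (w t)"

lemma V_in:
  assumes "max_level_interval \<gamma> w g a b" "t \<in> {a<..b}" "t \<in> Iset \<gamma>"
  shows "V t = Gint g a b / Wint w a b"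
proof -
  have "ennreal (w t) \<noteq> 0" using w_pos[OF assms(3)] by simp
  moreover have "ennreal (w t) \<noteq> top" by simp
  ultimately have "Gint g a b / Wint w a b * ennreal (w t) / ennreal (w t) = Gint g a b / Wint w a b"
    by (rule mult_divide_eq_ennreal)
  then show ?thesis unfolding V_def lf_in[OF assms(1,2)] .
qed

lemma V_out:
  assumes "\<not> (\<exists>a b. max_level_interval \<gamma> w g a b \<and> t \<in> {a<..b})" "t \<in> Iset \<gamma>"
  shows "V t = g t / ennreal (wx t)"
  unfolding V_def lf_out[OF assms(1)] wx_I[OF assms(2)] ..

lemma V_meas: "V \<in> borel_measurable (lebesgue_on (Iset \<gamma>))"
proof (rule borel_measurableI)
  fix U :: "ennreal set" assume U: "open U"
  define R where "R p = Gint g (fst p) (snd p) / Wint w (fst p) (snd p)" for p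
  define h where "h t = g t / ennreal (wx t)" for t
  have hm: "h \<in> borel_measurable borel"
    unfolding h_def using gmeas wx_meas by measurable
  define X where "X = (\<Union>p\<in>{p\<in>Fam. R p \<in> U}. {fst p<..snd p})"
  define Y where "Y = (\<Union>p\<in>Fam. {fst p<..snd p})"
  define B where "B = X \<union> (- Y \<inter> h -` U)"
  have "B \<in> sets borel"
  proof -
    have c1: "X \<in> sets borel" unfolding X_def
      using Fam_countable by (intro sets.countable_UN') (auto intro: countable_subset)
    have c2: "Y \<in> sets borel" unfolding Y_def
      using Fam_countable by (intro sets.countable_UN') auto
    have c3: "h -` U \<in> sets borel"
      using measurable_sets[OF hm borel_open[OF U]] by simp
    show ?thesis unfolding B_def by (rule sets.Un[OF c1 sets.Int[OF borel_comp[OF c2] c3]])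
  qed
  then have Bl: "B \<in> sets lebesgue" by simp
  have eq: "V -` U \<inter> Iset \<gamma> = Iset \<gamma> \<inter> B"
  proof (intro set_eqI iffI)
    fix t assume t: "t \<in> V -` U \<inter> Iset \<gamma>"
    show "t \<in> Iset \<gamma> \<inter> B"
    proof (cases "\<exists>a b. max_level_interval \<gamma> w g a b \<and> t \<in> {a<..b}")
      case True
      then obtain a b where ab: "max_level_interval \<gamma> w g a b" "t \<in> {a<..b}" by blast
      have "R (a, b) \<in> U" using V_in[OF ab] t by (simp add: R_def)
      have abF: "(a,b) \<in> {p\<in>Fam. R p \<in> U}" using ab(1) \<open>R (a, b) \<in> U\<close> by (simp add: Fam_def)
      have "t \<in> X" unfolding X_def by (rule UN_I[OF abF]) (use ab(2) in simp)
      moreover have "t \<in> Iset \<gamma>" using t by simp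
      ultimately show ?thesis unfolding B_def by simp
    next
      case False
      then have "h t \<in> U" using V_out[OF False] t by (simp add: h_def)
      moreover have "t \<notin> Y" using False by (auto simp: Fam_def Y_def)
      moreover have "t \<in> Iset \<gamma>" using t by simp
      ultimately show ?thesis unfolding B_def by simp
    qed
  next
    fix t assume t: "t \<in> Iset \<gamma> \<inter> B"
    show "t \<in> V -` U \<inter> Iset \<gamma>"
    proof (cases "\<exists>a b. max_level_interval \<gamma> w g a b \<and> t \<in> {a<..b}")
      case True
      then obtain a b where ab: "max_level_interval \<gamma> w g a b" "t \<in> {a<..b}" by blast
      have abF: "(a,b) \<in> Fam" using ab(1) by (simp add: Fam_def)
      have "t \<in> Y" unfolding Y_def
        by (rule UN_I[OF abF]) (use ab(2) in simp)
      moreover have "t \<in> B" using t by simp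
      ultimately have "t \<in> X" unfolding B_def by simp
      then have "t \<in> (\<Union>p\<in>{p\<in>Fam. R p \<in> U}. {fst p<..snd p})" unfolding X_def .
      then obtain p where p: "p \<in> Fam" "R p \<in> U" "t \<in> {fst p<..snd p}" by blast
      have "fst p = a \<and> snd p = b" using maxlev_unique[OF _ ab(1) p(3) ab(2)] p(1) by (auto simp: Fam_def)
      moreover have tI: "t \<in> Iset \<gamma>" using t by simp
      ultimately have "V t = R p" using V_in[OF ab tI] by (simp add: R_def)
      then show ?thesis using p(2) tI by simp
    next
      case False
      then have "t \<notin> X" by (auto simp: Fam_def X_def)
      moreover have "t \<in> B" using t by simp
      ultimately have "h t \<in> U" unfolding B_def by simp
      then show ?thesis using V_out[OF False] t by (simp add: h_def)
    qed
  qed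
  show "V -` U \<inter> space (lebesgue_on (Iset \<gamma>)) \<in> sets (lebesgue_on (Iset \<gamma>))"
  proof -
    have sp: "space (lebesgue_on (Iset \<gamma>)) = Iset \<gamma>" by (simp add: space_restrict_space)
    have "Iset \<gamma> \<inter> B \<in> (\<inter>) (Iset \<gamma>) ` sets lebesgue" using Bl by (rule imageI)
    then show ?thesis unfolding sp eq sets_restrict_space .
  qed
qed

end

lemma upset_borel:
  fixes S :: "ennreal set"
  assumes up: "\<And>x y. x \<in> S \<Longrightarrow> x \<le> y \<Longrightarrow> y \<in> S"
  shows "S \<in> sets borel"
proof (cases "Inf S \<in> S")
  case True
  have eq: "S = {Inf S..}" using True up by (auto intro: Inf_lower)
  show ?thesis by (subst eq) (rule borel_closed, simp)
next
  case False
  have "S = {Inf S<..}"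
  proof (intro set_eqI iffI)
    fix x assume "x \<in> S"
    then have "Inf S \<le> x" "x \<noteq> Inf S" using False by (auto intro: Inf_lower)
    then show "x \<in> {Inf S<..}" by auto
  next
    fix x assume "x \<in> {Inf S<..}"
    then have "Inf S < x" by simp
    then obtain s where "s \<in> S" "s < x" by (auto simp: Inf_less_iff)
    then show "x \<in> S" using up by auto
  qed
  then have eq: "S = {Inf S<..}" .
  show ?thesis by (subst eq) (rule borel_open, simp)
qed

lemma Iset_sets: "Iset \<gamma> \<in> sets borel"
proof -
  have "is_interval (Iset \<gamma>)"
    unfolding is_interval_1 Iset_def
    by (auto, meson ereal_less_eq(3) order_le_less_trans)
  then show ?thesis by (rule real_interval_borel_measurable)
qed

theorem mainTheorem14:
  fixes \<phi> p w f :: "real \<Rightarrow> real" and \<gamma> :: ereal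
  assumes "0 < \<gamma>"
    and "weight \<gamma> w"
    and "N_fun \<phi>"
    and "\<forall>u\<ge>0. ((\<lambda>h. (\<phi> (u + h) - \<phi> u) / h) \<longlongrightarrow> p u) (at_right 0)"
    and "f \<in> M_space \<phi> \<gamma> w"
    and "\<not> (AE t in lebesgue_on (Iset \<gamma>). f t = 0)"
  shows "Sup (ereal ` {k. 0 < k \<and>
           rho_OL (compl_fun \<phi>) \<gamma> w
             (\<lambda>t. extE p (ennreal k * fstar0 \<gamma> w f t / ennreal (w t))) \<le> 1}) < \<infinity>"
proof -
  have Nf: "N_fun \<phi>" by (rule assms(3))
  have cvx: "convex_on {0..} \<phi>" using Nf by (simp add: N_fun_def Orlicz_fun_def)
  note der = assms(4)
  have pmono: "\<And>x y. 0 \<le> x \<Longrightarrow> x \<le> y \<Longrightarrow> p x \<le> p y" using p_mono[OF cvx der] .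
  have extEmono: "mono (extE p)" using extE_mono[OF pmono] .
  define gs where "gs = rearr \<gamma> (\<lambda>x. ennreal \<bar>f x\<bar>)"
  have fm[measurable]: "f \<in> borel_measurable (lebesgue_on (Iset \<gamma>))"
    using assms(5) by (simp add: M_space_def)
  have sp: "space (lebesgue_on (Iset \<gamma>)) = Iset \<gamma>" by (simp add: space_restrict_space)
  have gs_anti: "gs t \<le> gs s" if "s \<le> t" for s t
    unfolding gs_def rearr_def
    by (rule Inf_superset_mono) (auto intro: order_trans ennreal_leI that)
  have gs_meas: "gs \<in> borel_measurable borel"
  proof (rule borel_measurableI_greater)
    fix y
    have "is_interval {x. y < gs x}"
      unfolding is_interval_1 using gs_anti by (auto intro: order_less_le_trans)
    then show "{x \<in> space borel. y < gs x} \<in> sets borel"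
      by (simp add: real_interval_borel_measurable)
  qed
  interpret L: LV \<gamma> w gs using assms(1,2) gs_meas by unfold_locales

  define A where "A n = {x \<in> space (lebesgue_on (Iset \<gamma>)). inverse (real (Suc n)) < \<bar>f x\<bar>}" for n
  have Ameas: "A n \<in> sets (lebesgue_on (Iset \<gamma>))" for n unfolding A_def by measurable
  obtain n where An: "0 < emeasure (lebesgue_on (Iset \<gamma>)) (A n)"
  proof -
    define N where "N = {x \<in> space (lebesgue_on (Iset \<gamma>)). \<not> f x = 0}"
    have Nm: "N \<in> sets (lebesgue_on (Iset \<gamma>))" unfolding N_def by measurable
    have "emeasure (lebesgue_on (Iset \<gamma>)) N \<noteq> 0"
      using AE_iff_measurable[OF Nm N_def[symmetric]] assms(6) by simp
    moreover have "N = (\<Union>n. A n)"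
    proof (intro set_eqI iffI)
      fix x assume "x \<in> N"
      then have "0 < \<bar>f x\<bar>" "x \<in> space (lebesgue_on (Iset \<gamma>))" by (auto simp: N_def)
      then obtain m where "m > 0" "inverse (real m) < \<bar>f x\<bar>" using ex_inverse_of_nat_less by blast
      then have "inverse (real (Suc (m - 1))) < \<bar>f x\<bar>" by simp
      then show "x \<in> (\<Union>n. A n)" using \<open>x \<in> space _\<close> by (auto simp: A_def)
    next
      fix x assume "x \<in> (\<Union>n. A n)"
      then obtain m where "x \<in> A m" by blast
      moreover have "0 < inverse (real (Suc m))" by simp
      ultimately show "x \<in> N" by (auto simp: A_def N_def)
    qed
    ultimately have "\<exists>n. emeasure (lebesgue_on (Iset \<gamma>)) (A n) \<noteq> 0"
      using emeasure_UN_eq_0[of "lebesgue_on (Iset \<gamma>)" A] Ameas by auto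
    then show ?thesis using that by (auto simp: zero_less_iff_neq_zero)
  qed
  define c0 where "c0 = inverse (real (Suc n))"
  have c0: "0 < c0" by (simp add: c0_def)

  obtain r where r: "0 < r" "ennreal r < emeasure (lebesgue_on (Iset \<gamma>)) (A n)"
  proof (cases "emeasure (lebesgue_on (Iset \<gamma>)) (A n) = \<infinity>")
    case True then show ?thesis using that[of 1] by simp
  next
    case False
    define m where "m = enn2real (emeasure (lebesgue_on (Iset \<gamma>)) (A n))"
    have em: "emeasure (lebesgue_on (Iset \<gamma>)) (A n) = ennreal m" "0 < m"
      using False An by (auto simp: m_def enn2real_positive_iff less_top)
    show ?thesis using that[of "m/2"] em by (simp add: ennreal_less_iff)
  qed
  obtain t0 where t0: "0 < t0" "t0 \<in> Iset \<gamma>" "ennreal t0 < emeasure (lebesgue_on (Iset \<gamma>)) (A n)"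
  proof (cases \<gamma>)
    case (real g)
    then have "0 < g" using assms(1) by simp
    define t where "t = min r (g / 2)"
    have "0 < t" "t \<le> r" "t < g" using \<open>0 < g\<close> r by (auto simp: t_def)
    then have "ennreal t < emeasure (lebesgue_on (Iset \<gamma>)) (A n)"
      using r(2) by (meson ennreal_leI order_le_less_trans)
    then show ?thesis using that[of t] \<open>0 < t\<close> \<open>t < g\<close> real by (simp add: Iset_def)
  next
    case PInf then show ?thesis using that[of r] r by (simp add: Iset_def)
  next
    case MInf then show ?thesis using assms(1) by simp
  qed

  have gs_t0: "ennreal c0 \<le> gs t0"
    unfolding gs_def rearr_def
  proof (rule Inf_greatest)
    fix s assume s: "s \<in> {s. emeasure (lebesgue_on (Iset \<gamma>)) {x \<in> Iset \<gamma>. s < ennreal \<bar>f x\<bar>} \<le> ennreal t0}"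
    show "ennreal c0 \<le> s"
    proof (rule ccontr)
      assume "\<not> ennreal c0 \<le> s"
      then have sc: "s < ennreal c0" by simp
      have sub: "A n \<subseteq> {x \<in> Iset \<gamma>. s < ennreal \<bar>f x\<bar>}"
      proof
        fix x assume "x \<in> A n"
        then have "c0 < \<bar>f x\<bar>" "x \<in> Iset \<gamma>" by (auto simp: A_def c0_def sp)
        then have "ennreal c0 < ennreal \<bar>f x\<bar>" using c0 by (simp add: ennreal_less_iff)
        then show "x \<in> {x \<in> Iset \<gamma>. s < ennreal \<bar>f x\<bar>}" using sc \<open>x \<in> Iset \<gamma>\<close> by auto
      qed
      have "{x \<in> space (lebesgue_on (Iset \<gamma>)). s < ennreal \<bar>f x\<bar>} \<in> sets (lebesgue_on (Iset \<gamma>))"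
        by measurable
      then have mS: "{x \<in> Iset \<gamma>. s < ennreal \<bar>f x\<bar>} \<in> sets (lebesgue_on (Iset \<gamma>))" by (simp add: sp)
      have "emeasure (lebesgue_on (Iset \<gamma>)) (A n) \<le> emeasure (lebesgue_on (Iset \<gamma>)) {x \<in> Iset \<gamma>. s < ennreal \<bar>f x\<bar>}"
        by (rule emeasure_mono[OF sub mS])
      also have "\<dots> \<le> ennreal t0" using s by simp
      finally show False using t0(3) by simp
    qed
  qed
  have gs_low: "ennreal c0 \<le> gs x" if "x \<le> t0" for x
    using gs_t0 gs_anti[OF that] by simp

  define c' where "c' = c0 / w 0"
  have w0: "0 < w 0" using L.w_pos[OF L.zero_I] .
  have c': "0 < c'" using c0 w0 by (simp add: c'_def)
  have V_low: "ennreal c' \<le> L.V x" if x: "0 < x" "x \<le> t0" for x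
  proof -
    have xI: "x \<in> Iset \<gamma>" using L.I_down[of x t0] x t0(2) by simp
    have key: "ennreal c' \<le> G / W" if "ennreal c' * W \<le> G" "W \<noteq> 0" "W \<noteq> \<infinity>" for G W :: ennreal
    proof -
      have "ennreal c' = ennreal c' * W / W" using that(2,3) by (simp add: mult_divide_eq_ennreal)
      also have "\<dots> \<le> G / W" using that(1) by (rule divide_right_mono_ennreal)
      finally show ?thesis .
    qed
    show ?thesis
    proof (cases "\<exists>a b. max_level_interval \<gamma> w gs a b \<and> x \<in> {a<..b}")
      case True
      then obtain a b where ab: "max_level_interval \<gamma> w gs a b" "x \<in> {a<..b}" by blast
      have lv: "level_interval \<gamma> w gs a b" using ab(1) by (simp add: max_level_interval_def)
      then have a0: "0 \<le> a" and bg: "ereal b \<le> \<gamma>" by (auto simp: level_interval_def)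
      define t' where "t' = min b t0"
      have t': "a < t'" "t' \<le> b" "t' \<le> t0" using ab(2) x by (auto simp: t'_def)
      have t'g: "ereal t' \<le> \<gamma>" using t'(2) bg by (rule L.ereal_le_trans)
      have rat: "Gint gs a t' / Wint w a t' \<le> Gint gs a b / Wint w a b"
        using lv t' by (auto simp: level_interval_def)
      have Glow: "ennreal (c0 * (t' - a)) \<le> Gint gs a t'"
      proof -
        have "(\<integral>\<^sup>+ y. ennreal c0 * indicator {a<..t'} y \<partial>lborel) \<le> Gint gs a t'"
          unfolding Gint_def
        proof (rule nn_integral_mono)
          fix y show "ennreal c0 * indicator {a<..t'} y \<le> gs y * indicator {a<..t'} y"
          proof (cases "y \<in> {a<..t'}")
            case True
            then have "y \<le> t0" using t'(3) by simp
            then show ?thesis using gs_low[of y] True by simp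
          qed simp
        qed
        then show ?thesis using t' c0 by (simp add: nn_integral_cmult_indicator ennreal_mult)
      qed
      have Wup: "Wint w a t' \<le> ennreal (w 0 * (t' - a))"
      proof -
        have "Wint w a t' \<le> (\<integral>\<^sup>+ y. ennreal (w 0) * indicator {a<..t'} y \<partial>lborel)"
          unfolding Wint_def
        proof (rule nn_integral_mono)
          fix y
          show "ennreal (w y) * indicator {a<..t'} y \<le> ennreal (w 0) * indicator {a<..t'} y"
          proof (cases "y \<in> {a<..t'}")
            case True
            then have "y \<in> Iset \<gamma>" using L.I_down[of y t0] t' t0(2) a0 by auto
            then have "w y \<le> w 0" using L.w_anti[OF L.zero_I] True a0 by auto
            then show ?thesis using True by (simp add: ennreal_leI)
          qed simp
        qed
        then show ?thesis using t' w0 by (simp add: nn_integral_cmult_indicator ennreal_mult)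
      qed
      have "ennreal c' * Wint w a t' \<le> ennreal c' * ennreal (w 0 * (t' - a))"
        using Wup by (rule mult_left_mono) simp
      also have "\<dots> = ennreal (c0 * (t' - a))"
        using c' w0 t' by (simp add: ennreal_mult[symmetric] c'_def)
      also have "\<dots> \<le> Gint gs a t'" by (rule Glow)
      finally have "ennreal c' \<le> Gint gs a t' / Wint w a t'"
        using L.W_pos[OF a0 t'(1) t'g] L.W_fin[OF a0 t'g] by (intro key) auto
      also have "\<dots> \<le> Gint gs a b / Wint w a b" by (rule rat)
      also have "\<dots> = L.V x" using L.V_in[OF ab xI] by simp
      finally show ?thesis .
    next
      case False
      have wx: "0 < w x" "w x \<le> w 0" using L.w_pos[OF xI] L.w_anti[OF L.zero_I xI] x by auto
      have "ennreal c' * ennreal (L.wx x) = ennreal (c0 * (w x / w 0))"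
        using L.wx_I[OF xI] c' wx by (simp add: ennreal_mult[symmetric] c'_def)
      also have "\<dots> \<le> ennreal c0" using c0 wx w0 by (intro ennreal_leI) (simp add: pos_divide_le_eq mult_left_mono)
      also have "\<dots> \<le> gs x" using gs_low x by simp
      finally have "ennreal c' \<le> gs x / ennreal (L.wx x)"
        using L.wx_I[OF xI] wx by (intro key) auto
      then show ?thesis using L.V_out[OF False xI] by simp
    qed
  qed

  define gk where "gk k t = extE p (ennreal k * fstar0 \<gamma> w f t / ennreal (w t))" for k t
  have gk_eq: "gk k t = extE p (ennreal k * L.V t)" for k t
  proof -
    have "L.V t = level_fun \<gamma> w gs t / ennreal (w t)" by (rule L.V_def)
    then show ?thesis unfolding gk_def fstar0_def gs_def by (simp add: ennreal_times_divide)
  qed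
  have gk_set: "{x \<in> Iset \<gamma>. s < gk k x} \<in> sets (lebesgue_on (Iset \<gamma>))" for k s
  proof -
    define S where "S = {z. s < extE p (ennreal k * z)}"
    have "S \<in> sets borel" unfolding S_def
    proof (rule upset_borel)
      fix x y :: ennreal assume "x \<in> {z. s < extE p (ennreal k * z)}" "x \<le> y"
      moreover have "extE p (ennreal k * x) \<le> extE p (ennreal k * y)"
        using \<open>x \<le> y\<close> by (intro monoD[OF extEmono] mult_left_mono) auto
      ultimately show "y \<in> {z. s < extE p (ennreal k * z)}" by (auto intro: order_less_le_trans)
    qed
    then have "L.V -` S \<inter> space (lebesgue_on (Iset \<gamma>)) \<in> sets (lebesgue_on (Iset \<gamma>))"
      by (rule measurable_sets[OF L.V_meas])
    moreover have "L.V -` S \<inter> space (lebesgue_on (Iset \<gamma>)) = {x \<in> Iset \<gamma>. s < gk k x}"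
      by (auto simp: sp gk_eq S_def)
    ultimately show ?thesis by simp
  qed
  have gk_low: "ennreal (p (k * c')) \<le> gk k x" if "0 < k" "0 < x" "x \<le> t0" for k x
  proof -
    have "ennreal k * ennreal c' \<le> ennreal k * L.V x"
      using V_low[OF that(2,3)] by (rule mult_left_mono) simp
    then have "extE p (ennreal k * ennreal c') \<le> extE p (ennreal k * L.V x)"
      by (rule monoD[OF extEmono])
    moreover have "extE p (ennreal k * ennreal c') = ennreal (p (k * c'))"
      using that(1) c' by (simp add: extE_def ennreal_mult[symmetric])
    ultimately show ?thesis by (simp add: gk_eq)
  qed
  have IL: "Iset \<gamma> \<inter> space lebesgue \<in> sets lebesgue" using Iset_sets[of \<gamma>] by simp
  have mu0: "emeasure (lebesgue_on (Iset \<gamma>)) {0<..t0} = ennreal t0"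
  proof -
    have sub: "{0<..t0} \<subseteq> Iset \<gamma>" using L.I_down[of _ t0] t0(2) by auto
    have "emeasure (lebesgue_on (Iset \<gamma>)) {0<..t0} = emeasure lebesgue {0<..t0}"
      by (rule emeasure_restrict_space[OF IL sub])
    also have "\<dots> = ennreal t0" using t0(1) by simp
    finally show ?thesis .
  qed
  have rearr_low: "ennreal (p (k * c')) \<le> rearr \<gamma> (gk k) t" if "0 < k" "0 \<le> t" "t < t0" for k t
    unfolding rearr_def
  proof (rule Inf_greatest)
    fix s assume s: "s \<in> {s. emeasure (lebesgue_on (Iset \<gamma>)) {x \<in> Iset \<gamma>. s < gk k x} \<le> ennreal t}"
    show "ennreal (p (k * c')) \<le> s"
    proof (rule ccontr)
      assume "\<not> ennreal (p (k * c')) \<le> s"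
      then have sl: "s < ennreal (p (k * c'))" by simp
      have sub: "{0<..t0} \<subseteq> {x \<in> Iset \<gamma>. s < gk k x}"
      proof
        fix x assume x: "x \<in> {0<..t0}"
        then have "x \<in> Iset \<gamma>" using L.I_down[of x t0] t0(2) by auto
        moreover have "s < gk k x" using sl gk_low[OF that(1), of x] x by (auto intro: order_less_le_trans)
        ultimately show "x \<in> {x \<in> Iset \<gamma>. s < gk k x}" by simp
      qed
      have "ennreal t0 \<le> emeasure (lebesgue_on (Iset \<gamma>)) {x \<in> Iset \<gamma>. s < gk k x}"
        using emeasure_mono[OF sub gk_set] mu0 by simp
      also have "\<dots> \<le> ennreal t" using s by simp
      finally have "t0 \<le> t" using that(2) by (simp add: ennreal_le_iff)
      then show False using that(3) by simp
    qed
  qed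
  have wt0: "0 < w t0" using L.w_pos[OF t0(2)] .
  have rho_low: "ennreal ((p (k * c') - \<phi> 1) * w t0 * t0) \<le> rho_OL (compl_fun \<phi>) \<gamma> w (gk k)"
    if k: "0 < k" and L1: "\<phi> 1 \<le> p (k * c')" for k
  proof -
    define Lk where "Lk = p (k * c')"
    have "(\<integral>\<^sup>+ t. ennreal ((Lk - \<phi> 1) * w t0) * indicator {0..<t0} t \<partial>lborel)
        \<le> rho_OL (compl_fun \<phi>) \<gamma> w (gk k)"
      unfolding rho_OL_def
    proof (rule nn_integral_mono)
      fix t
      show "ennreal ((Lk - \<phi> 1) * w t0) * indicator {0..<t0} t
          \<le> extE (compl_fun \<phi>) (rearr \<gamma> (gk k) t) * ennreal (w t) * indicator (Iset \<gamma>) t"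
      proof (cases "t \<in> {0..<t0}")
        case True
        then have tI: "t \<in> Iset \<gamma>" using L.I_down[of t t0] t0(2) by auto
        have wt: "w t0 \<le> w t" using L.w_anti[OF tI t0(2)] True by simp
        define r where "r = rearr \<gamma> (gk k) t"
        have rl: "ennreal Lk \<le> r" using rearr_low[OF k, of t] True by (simp add: r_def Lk_def)
        have e1: "ennreal (Lk - \<phi> 1) \<le> extE (compl_fun \<phi>) r"
        proof (cases "r = \<infinity>")
          case False
          have "enn2real (ennreal Lk) \<le> enn2real r" using rl False by (intro enn2real_mono) (auto simp: less_top)
          moreover have "0 \<le> Lk" using L1 Nf by (simp add: Lk_def N_fun_def Orlicz_fun_def) (smt (verit) zero_less_one)
          ultimately have "Lk \<le> enn2real r" by simp
          then have "Lk - \<phi> 1 \<le> compl_fun \<phi> (enn2real r)"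
            using compl_lower[OF Nf, of "enn2real r"] by simp
          then show ?thesis using False by (simp add: extE_def ennreal_leI)
        qed (simp add: extE_def)
        have "ennreal ((Lk - \<phi> 1) * w t0) = ennreal (Lk - \<phi> 1) * ennreal (w t0)"
          using L1 wt0 by (simp add: ennreal_mult Lk_def)
        also have "\<dots> \<le> extE (compl_fun \<phi>) r * ennreal (w t)"
          using e1 wt by (intro mult_mono) (auto simp: ennreal_leI)
        finally show ?thesis using True tI by (simp add: r_def)
      qed simp
    qed
    moreover have "(\<integral>\<^sup>+ t. ennreal ((Lk - \<phi> 1) * w t0) * indicator {0..<t0} t \<partial>lborel)
        = ennreal ((p (k * c') - \<phi> 1) * w t0 * t0)"
      using t0(1) L1 wt0 by (simp add: nn_integral_cmult_indicator ennreal_mult[symmetric] Lk_def)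
    ultimately show ?thesis by simp
  qed

  obtain U where U: "U > 0" "\<And>u. u \<ge> U \<Longrightarrow> \<phi> 1 + 2 / (w t0 * t0) \<le> \<phi> u / u"
    using Nfun_big[OF Nf] by blast
  define K where "K = U / c'"
  have bound: "k \<le> K" if k: "0 < k" and r1: "rho_OL (compl_fun \<phi>) \<gamma> w (gk k) \<le> 1" for k
  proof (rule ccontr)
    assume "\<not> k \<le> K"
    then have "U / c' < k" by (simp add: K_def)
    then have ku: "U < k * c'" using c' by (simp add: divide_less_eq)
    have "\<phi> 1 + 2 / (w t0 * t0) \<le> \<phi> (k * c') / (k * c')" using U(2)[of "k * c'"] ku by simp
    also have "\<dots> \<le> p (k * c')" using p_lower[OF Nf der, of "k * c'"] ku U(1) by simp
    finally have pl: "\<phi> 1 + 2 / (w t0 * t0) \<le> p (k * c')" .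
    have pos: "0 < w t0 * t0" using wt0 t0(1) by simp
    have "2 / (w t0 * t0) > 0" using pos by simp
    then have L1: "\<phi> 1 \<le> p (k * c')" using pl by linarith
    have "2 / (w t0 * t0) \<le> p (k * c') - \<phi> 1" using pl by linarith
    then have "2 \<le> (p (k * c') - \<phi> 1) * (w t0 * t0)"
      using pos_divide_le_eq[OF pos] by blast
    then have "2 \<le> (p (k * c') - \<phi> 1) * w t0 * t0" by (simp add: mult.assoc)
    then have "ennreal 2 \<le> ennreal ((p (k * c') - \<phi> 1) * w t0 * t0)" by (rule ennreal_leI)
    also have "\<dots> \<le> rho_OL (compl_fun \<phi>) \<gamma> w (gk k)" by (rule rho_low[OF k L1])
    also have "\<dots> \<le> 1" by (rule r1)
    finally show False by simp
  qed
  have gk_fun: "(\<lambda>t. extE p (ennreal k * fstar0 \<gamma> w f t / ennreal (w t))) = gk k" for k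
    by (rule ext) (simp add: gk_def)
  have "Sup (ereal ` {k. 0 < k \<and>
           rho_OL (compl_fun \<phi>) \<gamma> w
             (\<lambda>t. extE p (ennreal k * fstar0 \<gamma> w f t / ennreal (w t))) \<le> 1}) \<le> ereal K"
    by (rule Sup_least) (auto simp: gk_fun intro: bound)
  moreover have "ereal K < \<infinity>" by simp
  ultimately show ?thesis by (rule order_le_less_trans)
qed

end
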